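(* The class of graphs with no cycle with a unique chord is 2-cutset-safe.
   Context: All graphs are finite and simple. A cycle in $G$ is a set of distinct vertices $c_1,\dots,c_k$ with $c_1c_2,\dots,c_{k-1}c_k,c_kc_1\in E(G)$; any other edge of $G$ between two of these vertices is a chord. A graph contains a cycle with a unique chord if it has a cycle with exactly one chord; the class in question consists of graphs in which every cycle has no chord or at least two chords. A connected graph $G$ has a 1-cutset if there is $x$ with $G\setminus\{x\}$ having at least two components. A 2-cutset is a pair $u,v$ with $G\setminus\{u,v\}$ not connected. For a component $C$ of $G\setminus\{u,v\}$, $\operatorname{cl}(C)$ is obtained from the subgraph induced by $C\cup\{u,v\}$ by adding the edge $uv$, and $\operatorname{cl}^*(C)$ from $\operatorname{cl}(C)$ by subdividing $uv$ exactly once. A hereditary class $\mathcal{F}$ is 2-cutset-safe if for every $G\in\mathcal{F}$ with no 1-cutset, every 2-cutset $\{u,v\}$ of $G$ and every component $C$ of $G\setminus\{u,v\}$, either $\operatorname{cl}(C)\in\mathcal{F}$ or $\operatorname{cl}^*(C)\in\mathcal{F}$. *)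

theory Defs
  imports Main
begin

text \<open>Finite simple graphs with vertices from nat (an infinite vertex supply,
so that a fresh vertex for subdividing an edge always exists).
A graph is a pair (V, E) with E a set of 2-element subsets of V.\<close>

type_synonym ugraph = "nat set \<times> nat set set"

definition verts :: "ugraph \<Rightarrow> nat set" where "verts G = fst G"
definition edges :: "ugraph \<Rightarrow> nat set set" where "edges G = snd G"

definition is_graph :: "ugraph \<Rightarrow> bool" where
  "is_graph G \<longleftrightarrow> finite (verts G) \<and>
     (\<forall>e\<in>edges G. \<exists>x y. e = {x, y} \<and> x \<noteq> y \<and> x \<in> verts G \<and> y \<in> verts G)"

definition adj :: "ugraph \<Rightarrow> nat \<Rightarrow> nat \<Rightarrow> bool" where
  "adj G x y \<longleftrightarrow> {x, y} \<in> edges G \<and> x \<noteq> y"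

definition induced :: "ugraph \<Rightarrow> nat set \<Rightarrow> ugraph" where
  "induced G X = (verts G \<inter> X, {e \<in> edges G. e \<subseteq> X})"

definition delete :: "ugraph \<Rightarrow> nat set \<Rightarrow> ugraph" where
  "delete G X = induced G (verts G - X)"

definition is_cycle :: "ugraph \<Rightarrow> nat list \<Rightarrow> bool" where
  "is_cycle G cs \<longleftrightarrow> length cs \<ge> 3 \<and> distinct cs \<and> set cs \<subseteq> verts G \<and>
     (\<forall>i < length cs. adj G (cs ! i) (cs ! ((i + 1) mod length cs)))"

definition cycle_edges :: "nat list \<Rightarrow> nat set set" where
  "cycle_edges cs = {{cs ! i, cs ! ((i + 1) mod length cs)} | i. i < length cs}"

definition chords :: "ugraph \<Rightarrow> nat list \<Rightarrow> nat set set" where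
  "chords G cs = {e \<in> edges G. e \<subseteq> set cs} - cycle_edges cs"

definition has_cycle_unique_chord :: "ugraph \<Rightarrow> bool" where
  "has_cycle_unique_chord G \<longleftrightarrow> (\<exists>cs. is_cycle G cs \<and> card (chords G cs) = 1)"

definition no_unique_chord_class :: "ugraph \<Rightarrow> bool" where
  "no_unique_chord_class G \<longleftrightarrow> is_graph G \<and> \<not> has_cycle_unique_chord G"

definition reach :: "ugraph \<Rightarrow> nat \<Rightarrow> nat \<Rightarrow> bool" where
  "reach G = (\<lambda>x y. x \<in> verts G \<and> y \<in> verts G \<and> adj G x y)\<^sup>*\<^sup>*"

definition components :: "ugraph \<Rightarrow> nat set set" where
  "components G = {{y \<in> verts G. reach G x y} | x. x \<in> verts G}"

definition connected_graph :: "ugraph \<Rightarrow> bool" where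
  "connected_graph G \<longleftrightarrow> card (components G) = 1"

definition has_1cutset :: "ugraph \<Rightarrow> bool" where
  "has_1cutset G \<longleftrightarrow> connected_graph G \<and>
     (\<exists>x \<in> verts G. card (components (delete G {x})) \<ge> 2)"

definition is_2cutset :: "ugraph \<Rightarrow> nat \<Rightarrow> nat \<Rightarrow> bool" where
  "is_2cutset G u v \<longleftrightarrow> u \<in> verts G \<and> v \<in> verts G \<and> u \<noteq> v \<and>
     \<not> connected_graph (delete G {u, v})"

definition cl :: "ugraph \<Rightarrow> nat \<Rightarrow> nat \<Rightarrow> nat set \<Rightarrow> ugraph" where
  "cl G u v C = (let H = induced G (C \<union> {u, v}) in (verts H, edges H \<union> {{u, v}}))"

definition cl_star :: "ugraph \<Rightarrow> nat \<Rightarrow> nat \<Rightarrow> nat set \<Rightarrow> nat \<Rightarrow> ugraph" where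
  "cl_star G u v C w = (let H = induced G (C \<union> {u, v}) in
     (verts H \<union> {w}, (edges H - {{u, v}}) \<union> {{u, w}, {w, v}}))"

definition hereditary :: "(ugraph \<Rightarrow> bool) \<Rightarrow> bool" where
  "hereditary F \<longleftrightarrow> (\<forall>G X. F G \<longrightarrow> F (induced G X))"

definition two_cutset_safe :: "(ugraph \<Rightarrow> bool) \<Rightarrow> bool" where
  "two_cutset_safe F \<longleftrightarrow> hereditary F \<and>
     (\<forall>G u v C. F G \<and> connected_graph G \<and> \<not> has_1cutset G \<and> is_2cutset G u v \<and>
        C \<in> components (delete G {u, v}) \<longrightarrow>
        F (cl G u v C) \<or> (\<exists>w. w \<notin> verts G \<and> F (cl_star G u v C w)))"

end

theory Submission
  imports Defs
begin

fun pe :: "nat list \<Rightarrow> nat set set" where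
  "pe (x # y # zs) = insert {x, y} (pe (y # zs))"
| "pe _ = {}"

lemma pe_Cons: "ys \<noteq> [] \<Longrightarrow> pe (x # ys) = insert {x, hd ys} (pe ys)"
  by (cases ys) auto

lemma pe_append: "xs \<noteq> [] \<Longrightarrow> ys \<noteq> [] \<Longrightarrow> pe (xs @ ys) = pe xs \<union> pe ys \<union> {{last xs, hd ys}}"
proof (induction xs)
  case Nil then show ?case by simp
next
  case (Cons x xs)
  show ?case
  proof (cases "xs = []")
    case True then show ?thesis using Cons.prems by (simp add: pe_Cons)
  next
    case False then show ?thesis using Cons by (auto simp add: pe_Cons)
  qed
qed

lemma pe_split: "pe (xs @ x # ys) = pe (xs @ [x]) \<union> pe (x # ys)"
proof (cases "xs = []")
  case True then show ?thesis by simp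
next
  case False
  then show ?thesis using pe_append[of xs "x # ys"] pe_append[of xs "[x]"] by auto
qed

lemma pe_form: "e \<in> pe xs \<Longrightarrow> \<exists>x y. e = {x, y} \<and> x \<in> set xs \<and> y \<in> set xs"
  by (induction xs rule: pe.induct) auto

lemma pe_sub: "e \<in> pe xs \<Longrightarrow> e \<subseteq> set xs"
  using pe_form by blast

lemma pe_nth: "pe xs = {{xs ! i, xs ! Suc i} | i. Suc i < length xs}"
proof (induction xs rule: pe.induct)
  case (1 x y zs)
  show ?case
  proof (rule set_eqI, rule iffI)
    fix e assume "e \<in> pe (x # y # zs)"
    then have "e = {x, y} \<or> e \<in> pe (y # zs)" by simp
    then show "e \<in> {{(x # y # zs) ! i, (x # y # zs) ! Suc i} | i. Suc i < length (x # y # zs)}"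
    proof
      assume "e = {x, y}" then show ?thesis by (intro CollectI exI[of _ 0]) auto
    next
      assume "e \<in> pe (y # zs)"
      then obtain i where "e = {(y # zs) ! i, (y # zs) ! Suc i}" "Suc i < length (y # zs)"
        using 1 by auto
      then show ?thesis by (intro CollectI exI[of _ "Suc i"]) auto
    qed
  next
    fix e assume "e \<in> {{(x # y # zs) ! i, (x # y # zs) ! Suc i} | i. Suc i < length (x # y # zs)}"
    then obtain i where i: "e = {(x # y # zs) ! i, (x # y # zs) ! Suc i}" "Suc i < length (x # y # zs)"
      by auto
    show "e \<in> pe (x # y # zs)"
    proof (cases i)
      case 0 then show ?thesis using i by simp
    next
      case (Suc j)
      then have "e \<in> {{(y # zs) ! i, (y # zs) ! Suc i} | i. Suc i < length (y # zs)}"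
        using i by auto
      then show ?thesis using 1 by simp
    qed
  qed
qed auto

lemma cycle_edges_pe: "cs \<noteq> [] \<Longrightarrow> cycle_edges cs = pe cs \<union> {{last cs, hd cs}}"
proof (rule set_eqI, rule iffI)
  fix e assume ne: "cs \<noteq> []" and "e \<in> cycle_edges cs"
  then obtain i where i: "i < length cs" "e = {cs ! i, cs ! ((i + 1) mod length cs)}"
    unfolding cycle_edges_def by auto
  show "e \<in> pe cs \<union> {{last cs, hd cs}}"
  proof (cases "Suc i < length cs")
    case True then show ?thesis using i unfolding pe_nth by auto
  next
    case False then have "i = length cs - 1" using i by auto
    then show ?thesis using i ne by (simp add: last_conv_nth hd_conv_nth)
  qed
next
  fix e assume ne: "cs \<noteq> []" and "e \<in> pe cs \<union> {{last cs, hd cs}}"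
  then consider "e \<in> pe cs" | "e = {last cs, hd cs}" by auto
  then show "e \<in> cycle_edges cs"
  proof cases
    case 1
    then obtain i where "e = {cs ! i, cs ! Suc i}" "Suc i < length cs" unfolding pe_nth by auto
    then show ?thesis unfolding cycle_edges_def by (intro CollectI exI[of _ i]) auto
  next
    case 2
    then show ?thesis using ne unfolding cycle_edges_def
      by (intro CollectI exI[of _ "length cs - 1"]) (auto simp: last_conv_nth hd_conv_nth)
  qed
qed

lemma cycle_edges_sub: "e \<in> cycle_edges cs \<Longrightarrow> e \<subseteq> set cs"
proof -
  assume "e \<in> cycle_edges cs"
  then obtain i where i: "i < length cs" "e = {cs ! i, cs ! ((i + 1) mod length cs)}"
    unfolding cycle_edges_def by auto
  then have "(i + 1) mod length cs < length cs" by (intro mod_less_divisor) auto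
  then show ?thesis using i by auto
qed

lemma is_cycle_iff: "is_cycle G cs \<longleftrightarrow> 3 \<le> length cs \<and> distinct cs \<and> set cs \<subseteq> verts G \<and> cycle_edges cs \<subseteq> edges G"
proof
  assume "is_cycle G cs" then show "3 \<le> length cs \<and> distinct cs \<and> set cs \<subseteq> verts G \<and> cycle_edges cs \<subseteq> edges G"
    unfolding is_cycle_def cycle_edges_def adj_def by auto
next
  assume A: "3 \<le> length cs \<and> distinct cs \<and> set cs \<subseteq> verts G \<and> cycle_edges cs \<subseteq> edges G"
  have "adj G (cs ! i) (cs ! ((i + 1) mod length cs))" if "i < length cs" for i
  proof -
    have "{cs ! i, cs ! ((i + 1) mod length cs)} \<in> edges G"
      using A that unfolding cycle_edges_def by auto
    moreover have "i \<noteq> (i + 1) mod length cs"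
    proof (cases "Suc i < length cs")
      case True then show ?thesis by simp
    next
      case False then have "i = length cs - 1" using that by auto
      moreover have "Suc (length cs - 1) = length cs" using A by auto
      ultimately show ?thesis using A by auto
    qed
    then have "cs ! i \<noteq> cs ! ((i + 1) mod length cs)"
    proof -
      have "(i + 1) mod length cs < length cs" using that by (intro mod_less_divisor) auto
      then show ?thesis using A that \<open>i \<noteq> (i + 1) mod length cs\<close> by (subst nth_eq_iff_index_eq) auto
    qed
    ultimately show ?thesis unfolding adj_def by auto
  qed
  then show "is_cycle G cs" using A unfolding is_cycle_def by auto
qed

lemma cycle_edges_rotate1: "cycle_edges (rotate1 cs) = cycle_edges cs"
proof (cases cs)
  case Nil then show ?thesis by simp
next
  case (Cons x xs)
  show ?thesis
  proof (cases "xs = []")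
    case True then show ?thesis using Cons by simp
  next
    case False
    then show ?thesis using Cons
      by (auto simp: cycle_edges_pe pe_append pe_Cons)
  qed
qed

lemma cycle_edges_rotate: "cycle_edges (rotate n cs) = cycle_edges cs"
  by (induction n) (auto simp: rotate_Suc cycle_edges_rotate1)

lemma induced_path:
  assumes E2: "\<forall>e\<in>E. \<exists>x y. e = {x, y} \<and> x \<noteq> y"
  shows "L \<noteq> [] \<Longrightarrow> pe L \<subseteq> E \<Longrightarrow> \<exists>L'. L' \<noteq> [] \<and> hd L' = hd L \<and> last L' = last L \<and>
     set L' \<subseteq> set L \<and> distinct L' \<and> pe L' \<subseteq> E \<and> (\<forall>e\<in>E. e \<subseteq> set L' \<longrightarrow> e \<in> pe L')"
proof (induction "length L" arbitrary: L rule: less_induct)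
  case less
  show ?case
  proof (cases "distinct L")
    case False
    then obtain xs y ys zs where L: "L = xs @ [y] @ ys @ [y] @ zs" using not_distinct_decomp by blast
    define L1 where "L1 = xs @ y # zs"
    have len: "length L1 < length L" using L L1_def by simp
    have ne: "L1 \<noteq> []" by (simp add: L1_def)
    have hd: "hd L1 = hd L" by (cases xs) (auto simp: L L1_def)
    have last: "last L1 = last L" by (cases zs) (auto simp: L L1_def)
    have set: "set L1 \<subseteq> set L" by (auto simp: L L1_def)
    have "pe L = pe (xs @ [y]) \<union> pe (y # ys @ [y]) \<union> pe (y # zs)"
      using pe_split[of xs y "ys @ y # zs"] pe_split[of "y # ys" y zs] by (simp add: L Un_assoc)
    moreover have "pe L1 = pe (xs @ [y]) \<union> pe (y # zs)" using pe_split[of xs y zs] by (simp add: L1_def)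
    ultimately have "pe L1 \<subseteq> E" using less.prems by auto
    from less.hyps[OF len ne this] hd last set show ?thesis by (metis order_trans)
  next
    case True
    show ?thesis
    proof (cases "\<forall>e\<in>E. e \<subseteq> set L \<longrightarrow> e \<in> pe L")
      case True with \<open>distinct L\<close> less.prems show ?thesis by blast
    next
      case False
      then obtain e where e: "e \<in> E" "e \<subseteq> set L" "e \<notin> pe L" by blast
      obtain x y where xy: "e = {x, y}" "x \<noteq> y" using E2 e(1) by blast
      have "\<exists>l1 l2 l3 x' y'. L = l1 @ x' # l2 @ y' # l3 \<and> e = {x', y'}"
      proof -
        from e(2) xy have yL: "x \<in> set L" "y \<in> set L" by auto
        then obtain l1 r where L1: "L = l1 @ x # r" by (meson split_list)
        show ?thesis
        proof (cases "y \<in> set r")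
          case True then obtain l2 l3 where "r = l2 @ y # l3" by (meson split_list)
          then show ?thesis using L1 xy
            by (intro exI[of _ l1] exI[of _ l2] exI[of _ l3] exI[of _ x] exI[of _ y]) simp
        next
          case False then have "y \<in> set l1" using yL L1 xy(2) by auto
          then obtain l2 l3 where "l1 = l2 @ y # l3" by (meson split_list)
          then show ?thesis using L1 xy
            by (intro exI[of _ l2] exI[of _ l3] exI[of _ r] exI[of _ y] exI[of _ x]) (simp add: insert_commute)
        qed
      qed
      then obtain l1 l2 l3 x' y' where L: "L = l1 @ x' # l2 @ y' # l3" and exy: "e = {x', y'}" by blast
      have peL: "pe L = pe (l1 @ [x']) \<union> pe (x' # l2 @ [y']) \<union> pe (y' # l3)"
        using pe_split[of l1 x' "l2 @ y' # l3"] pe_split[of "x' # l2" y' l3] by (simp add: L Un_assoc)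
      have l2: "l2 \<noteq> []"
      proof
        assume "l2 = []" then have "e \<in> pe L" using peL exy by simp
        then show False using e(3) by simp
      qed
      define L1 where "L1 = l1 @ x' # y' # l3"
      have peL1: "pe L1 = pe (l1 @ [x']) \<union> insert {x', y'} (pe (y' # l3))"
        using pe_split[of l1 x' "y' # l3"] by (simp add: L1_def)
      have len: "length L1 < length L" using L L1_def l2 by simp
      have ne: "L1 \<noteq> []" by (simp add: L1_def)
      have hd: "hd L1 = hd L" by (cases l1) (auto simp: L L1_def)
      have last: "last L1 = last L" by (cases l3) (auto simp: L L1_def)
      have set: "set L1 \<subseteq> set L" by (auto simp: L L1_def)
      have "pe L1 \<subseteq> E" using peL peL1 less.prems e(1) exy by auto
      from less.hyps[OF len ne this] hd last set show ?thesis by (metis order_trans)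
    qed
  qed
qed

lemma middle:
  assumes "distinct L" "2 \<le> length L"
  shows "L = hd L # butlast (tl L) @ [last L] \<and> hd L \<notin> set (butlast (tl L)) \<and> last L \<notin> set (butlast (tl L))
     \<and> distinct (butlast (tl L))"
proof -
  obtain x r where L: "L = x # r" using assms by (cases L) auto
  then have "r \<noteq> []" using assms by auto
  have d: "distinct (x # butlast r @ [last r])" using assms L \<open>r \<noteq> []\<close> by simp
  then have "distinct (butlast r)" "x \<notin> set (butlast r)" "last r \<notin> set (butlast r)" by auto
  then show ?thesis unfolding L using \<open>r \<noteq> []\<close> by simp
qed

lemma hd_neq_last: "distinct xs \<Longrightarrow> 2 \<le> length xs \<Longrightarrow> hd xs \<noteq> last xs"
  by (cases xs) (auto simp: last_ConsR)

lemma adj_sym: "adj D x y \<Longrightarrow> adj D y x"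
  unfolding adj_def by (auto simp: insert_commute)

lemma reach_sym: "reach D x y \<Longrightarrow> reach D y x"
  unfolding reach_def
proof (induction rule: rtranclp_induct)
  case base then show ?case by simp
next
  case (step y z)
  then show ?case by (metis (mono_tags, lifting) adj_sym converse_rtranclp_into_rtranclp)
qed

lemma reach_trans: "reach D x y \<Longrightarrow> reach D y z \<Longrightarrow> reach D x z"
  unfolding reach_def by (rule rtranclp_trans)

lemma reach_refl: "reach D x x"
  unfolding reach_def by simp

lemma reach_verts: "reach D x y \<Longrightarrow> x \<in> verts D \<Longrightarrow> y \<in> verts D"
  unfolding reach_def by (induction rule: rtranclp_induct) auto

lemma reach_step: "reach D x y \<Longrightarrow> y \<in> verts D \<Longrightarrow> z \<in> verts D \<Longrightarrow> adj D y z \<Longrightarrow> reach D x z"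
  unfolding reach_def by (rule rtranclp.rtrancl_into_rtrancl) auto

lemma comp_rep: "C \<in> components D \<Longrightarrow> \<exists>x\<in>verts D. C = {y \<in> verts D. reach D x y}"
  unfolding components_def by auto

lemma comp_sub: "C \<in> components D \<Longrightarrow> C \<subseteq> verts D"
  unfolding components_def by auto

lemma comp_reach: "C \<in> components D \<Longrightarrow> y \<in> C \<Longrightarrow> z \<in> C \<Longrightarrow> reach D y z"
  by (metis (mono_tags, lifting) comp_rep mem_Collect_eq reach_sym reach_trans)

lemma comp_reach_closed: "C \<in> components D \<Longrightarrow> y \<in> C \<Longrightarrow> reach D y z \<Longrightarrow> z \<in> C"
proof -
  assume a: "C \<in> components D" "y \<in> C" "reach D y z"
  then obtain x where x: "x \<in> verts D" "C = {y \<in> verts D. reach D x y}" using comp_rep by blast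
  then have "reach D x z" using a reach_trans by blast
  moreover have "z \<in> verts D" using a x reach_verts by blast
  ultimately show ?thesis using x by blast
qed

lemma comp_closed: "C \<in> components D \<Longrightarrow> y \<in> C \<Longrightarrow> z \<in> verts D \<Longrightarrow> adj D y z \<Longrightarrow> z \<in> C"
  by (meson comp_reach_closed comp_sub reach_refl reach_step subsetD)

lemma comp_same: "C \<in> components D \<Longrightarrow> C' \<in> components D \<Longrightarrow> z \<in> C \<Longrightarrow> z \<in> C' \<Longrightarrow> C = C'"
proof -
  assume a: "C \<in> components D" "C' \<in> components D" "z \<in> C" "z \<in> C'"
  have "C \<subseteq> C'"
  proof
    fix y assume "y \<in> C"
    then have "reach D z y" using a comp_reach by blast
    then show "y \<in> C'" using a comp_reach_closed by blast
  qed
  moreover have "C' \<subseteq> C"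
  proof
    fix y assume "y \<in> C'"
    then have "reach D z y" using a comp_reach by blast
    then show "y \<in> C" using a comp_reach_closed by blast
  qed
  ultimately show ?thesis by blast
qed

lemma comp_in: "x \<in> verts D \<Longrightarrow> {y \<in> verts D. reach D x y} \<in> components D"
  unfolding components_def by blast

lemma finite_components: "finite (verts D) \<Longrightarrow> finite (components D)"
proof -
  assume "finite (verts D)"
  moreover have "components D \<subseteq> Pow (verts D)" unfolding components_def by auto
  ultimately show ?thesis by (meson finite_Pow_iff finite_subset)
qed

lemma reach_walk: "reach D p q \<Longrightarrow> \<exists>xs. xs \<noteq> [] \<and> hd xs = p \<and> last xs = q \<and> pe xs \<subseteq> edges D \<and> set xs \<subseteq> {y. reach D p y}"
proof -
  assume "reach D p q"
  then have "(\<lambda>x y. x \<in> verts D \<and> y \<in> verts D \<and> adj D x y)\<^sup>*\<^sup>* p q" unfolding reach_def .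
  then show ?thesis
  proof (induction rule: rtranclp_induct)
    case base then show ?case by (intro exI[of _ "[p]"]) (auto simp: reach_refl)
  next
    case (step y z)
    then obtain xs where xs: "xs \<noteq> []" "hd xs = p" "last xs = y" "pe xs \<subseteq> edges D" "set xs \<subseteq> {y. reach D p y}" by blast
    have "reach D p z"
      using step(1,2) unfolding reach_def by (rule rtranclp.rtrancl_into_rtrancl)
    moreover have "pe (xs @ [z]) = pe xs \<union> {{y, z}}" using pe_append[of xs "[z]"] xs by simp
    moreover have "{y, z} \<in> edges D" using step(2) unfolding adj_def by auto
    ultimately show ?case using xs by (intro exI[of _ "xs @ [z]"]) auto
  qed
qed

lemma verts_induced[simp]: "verts (induced G X) = verts G \<inter> X"
  unfolding induced_def verts_def by simp
lemma edges_induced[simp]: "edges (induced G X) = {e \<in> edges G. e \<subseteq> X}"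
  unfolding induced_def edges_def by simp
lemma verts_delete[simp]: "verts (delete G X) = verts G - X"
  unfolding delete_def by auto
lemma edges_delete[simp]: "edges (delete G X) = {e \<in> edges G. e \<subseteq> verts G - X}"
  unfolding delete_def by auto
lemma verts_cl_star[simp]: "verts (cl_star G u v C w) = verts G \<inter> (C \<union> {u, v}) \<union> {w}"
  unfolding cl_star_def Let_def by (simp add: verts_def induced_def)
lemma edges_cl_star[simp]: "edges (cl_star G u v C w) = ({e \<in> edges G. e \<subseteq> C \<union> {u, v}} - {{u, v}}) \<union> {{u, w}, {w, v}}"
  unfolding cl_star_def Let_def by (simp add: edges_def induced_def)

lemma graph_edge: "is_graph G \<Longrightarrow> e \<in> edges G \<Longrightarrow> \<exists>x y. e = {x, y} \<and> x \<noteq> y \<and> x \<in> verts G \<and> y \<in> verts G"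
  unfolding is_graph_def by blast

lemma graph_edge_sub: "is_graph G \<Longrightarrow> e \<in> edges G \<Longrightarrow> e \<subseteq> verts G"
  using graph_edge by blast

lemma hered: "no_unique_chord_class G \<Longrightarrow> no_unique_chord_class (induced G X)"
proof -
  assume A: "no_unique_chord_class G"
  then have g: "is_graph G" unfolding no_unique_chord_class_def by simp
  have g2: "is_graph (induced G X)"
  proof -
    have "finite (verts (induced G X))" using g unfolding is_graph_def by simp
    moreover have "\<exists>x y. e = {x, y} \<and> x \<noteq> y \<and> x \<in> verts (induced G X) \<and> y \<in> verts (induced G X)"
      if "e \<in> edges (induced G X)" for e
    proof -
      from that have e: "e \<in> edges G" "e \<subseteq> X" by auto
      then obtain x y where "e = {x, y}" "x \<noteq> y" "x \<in> verts G" "y \<in> verts G" using graph_edge[OF g] by blast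
      then show ?thesis using e by auto
    qed
    ultimately show ?thesis unfolding is_graph_def by blast
  qed
  have "\<not> has_cycle_unique_chord (induced G X)"
  proof
    assume "has_cycle_unique_chord (induced G X)"
    then obtain cs where cs: "is_cycle (induced G X) cs" "card (chords (induced G X) cs) = 1"
      unfolding has_cycle_unique_chord_def by blast
    have "is_cycle G cs" using cs(1) unfolding is_cycle_iff by auto
    moreover have "chords (induced G X) cs = chords G cs"
      using cs(1) unfolding chords_def is_cycle_iff by auto
    ultimately show False using A cs(2) unfolding no_unique_chord_class_def has_cycle_unique_chord_def by metis
  qed
  then show ?thesis using g2 unfolding no_unique_chord_class_def by simp
qed

lemma nbr:
  assumes g: "is_graph G" and conn: "connected_graph G" and no1: "\<not> has_1cutset G"
    and uv: "u \<in> verts G" "v \<in> verts G" "u \<noteq> v"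
    and C': "C' \<in> components (delete G {u, v})"
  shows "\<exists>c\<in>C'. {u, c} \<in> edges G"
proof (rule ccontr)
  assume nc: "\<not> ?thesis"
  define D where "D = delete G {u, v}"
  define G2 where "G2 = delete G {v}"
  obtain x0 where x0: "x0 \<in> verts D" "C' = {y \<in> verts D. reach D x0 y}"
    using comp_rep C' D_def by blast
  have key: "y \<in> C'" if "reach G2 x0 y" for y
  proof -
    have "(\<lambda>x y. x \<in> verts G2 \<and> y \<in> verts G2 \<and> adj G2 x y)\<^sup>*\<^sup>* x0 y" using that unfolding reach_def .
    then show ?thesis
    proof (induction rule: rtranclp_induct)
      case base then show ?case using x0 reach_refl by blast
    next
      case (step y z)
      have "z \<noteq> v" using step(2) unfolding G2_def by auto
      have ey: "{y, z} \<in> edges G" using step(2) unfolding G2_def adj_def by auto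
      have "z \<noteq> u"
      proof
        assume "z = u"
        then have "{u, y} \<in> edges G" using ey by (simp add: insert_commute)
        then show False using nc step(3) by blast
      qed
      have yD: "y \<in> verts D" using step(3) C' D_def comp_sub by blast
      have zD: "z \<in> verts D" using \<open>z \<noteq> v\<close> \<open>z \<noteq> u\<close> step(2) unfolding G2_def D_def by auto
      have "adj D y z" using ey yD zD step(2) unfolding D_def adj_def by auto
      then show ?case using comp_closed[of C' D y z] C' D_def step(3) zD by blast
    qed
  qed
  define K1 where "K1 = {y \<in> verts G2. reach G2 u y}"
  define K2 where "K2 = {y \<in> verts G2. reach G2 x0 y}"
  have uG2: "u \<in> verts G2" using uv unfolding G2_def by auto
  have x0G2: "x0 \<in> verts G2" using x0 unfolding G2_def D_def by auto
  have K1: "K1 \<in> components G2" using comp_in[OF uG2] K1_def by simp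
  have K2: "K2 \<in> components G2" using comp_in[OF x0G2] K2_def by simp
  have "u \<in> K1" using uG2 reach_refl K1_def by blast
  moreover have "u \<notin> K2"
  proof
    assume "u \<in> K2"
    then have "u \<in> C'" using key K2_def by blast
    then show False using C' comp_sub by fastforce
  qed
  ultimately have "K1 \<noteq> K2" by blast
  moreover have "finite (components G2)"
    using g finite_components unfolding is_graph_def G2_def by auto
  ultimately have "card {K1, K2} \<le> card (components G2)" using K1 K2 by (intro card_mono) auto
  then have "card (components G2) \<ge> 2" using \<open>K1 \<noteq> K2\<close> by simp
  then have "has_1cutset G" using conn uv unfolding has_1cutset_def G2_def by blast
  then show False using no1 by simp
qed

lemma path_exists:
  assumes g: "is_graph G" and C': "C' \<in> components (delete G {u, v})"
    and ab: "a \<in> {u, v}" "b \<in> {u, v}" "a \<noteq> b" and nab: "{a, b} \<notin> edges G"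
    and nb: "\<forall>z\<in>{u, v}. \<exists>c\<in>C'. {z, c} \<in> edges G"
  shows "\<exists>Q. Q \<noteq> [] \<and> set Q \<subseteq> C' \<and> distinct Q \<and> a \<notin> set Q \<and> b \<notin> set Q \<and>
     pe (b # Q @ [a]) \<subseteq> edges G \<and> (\<forall>e\<in>edges G. e \<subseteq> insert a (insert b (set Q)) \<longrightarrow> e \<in> pe (b # Q @ [a]))"
proof -
  define D where "D = delete G {u, v}"
  obtain nb' where nb': "nb' \<in> C'" "{b, nb'} \<in> edges G" using nb ab by blast
  obtain na where na: "na \<in> C'" "{a, na} \<in> edges G" using nb ab by blast
  have "reach D nb' na" using comp_reach C' nb' na D_def by blast
  then obtain xs where xs: "xs \<noteq> []" "hd xs = nb'" "last xs = na" "pe xs \<subseteq> edges D" "set xs \<subseteq> {y. reach D nb' y}"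
    using reach_walk by blast
  have setxs: "set xs \<subseteq> C'" using xs(5) comp_reach_closed[of C' D nb'] C' D_def nb'(1) by blast
  have peD: "pe xs \<subseteq> edges G" using xs(4) D_def by auto
  define L where "L = b # xs @ [a]"
  have peL: "pe L = insert {b, nb'} (pe xs \<union> {{na, a}})"
    unfolding L_def using xs pe_Cons[of "xs @ [a]" b] pe_append[of xs "[a]"] by simp
  have "{na, a} \<in> edges G" using na by (simp add: insert_commute)
  then have peLE: "pe L \<subseteq> edges G" using peL peD nb' by auto
  have E2: "\<forall>e\<in>edges G. \<exists>x y. e = {x, y} \<and> x \<noteq> y" using graph_edge[OF g] by blast
  obtain L' where L': "L' \<noteq> []" "hd L' = b" "last L' = a" "set L' \<subseteq> set L" "distinct L'" "pe L' \<subseteq> edges G"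
    "\<forall>e\<in>edges G. e \<subseteq> set L' \<longrightarrow> e \<in> pe L'"
    using induced_path[OF E2, of L] peLE unfolding L_def by auto
  have "length L' \<noteq> 1"
  proof
    assume "length L' = 1" then obtain x where "L' = [x]" by (cases L') auto
    then show False using L' ab by auto
  qed
  then have len2: "2 \<le> length L'" using L'(1) by (cases L') (auto simp: Suc_le_eq)
  define Q where "Q = butlast (tl L')"
  have M: "L' = b # Q @ [a]" "b \<notin> set Q" "a \<notin> set Q" "distinct Q"
    using middle[OF L'(5) len2] L' unfolding Q_def by auto
  have "Q \<noteq> []"
  proof
    assume "Q = []" then have "{b, a} \<in> edges G" using M L'(6) by simp
    then show False using nab by (simp add: insert_commute)
  qed
  moreover have "set Q \<subseteq> C'" using M L'(4) setxs unfolding L_def by auto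
  moreover have "set L' = insert a (insert b (set Q))" using M by auto
  ultimately show ?thesis using M L' by metis
qed

lemma main_lemma:
  assumes g: "is_graph G" and nouc: "\<not> has_cycle_unique_chord G"
    and nuv: "{u, v} \<notin> edges G" and uv: "u \<in> verts G" "v \<in> verts G" "u \<noteq> v"
    and w: "w \<notin> verts G"
    and C: "C \<in> components (delete G {u, v})" and C': "C' \<in> components (delete G {u, v})" "C' \<noteq> C"
    and nb: "\<forall>z\<in>{u, v}. \<exists>c\<in>C'. {z, c} \<in> edges G"
  shows "\<not> has_cycle_unique_chord (cl_star G u v C w)"
proof
  define K where "K = cl_star G u v C w"
  define D where "D = delete G {u, v}"
  assume "has_cycle_unique_chord (cl_star G u v C w)"
  then obtain cs where cs: "is_cycle K cs" "card (chords K cs) = 1"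
    unfolding has_cycle_unique_chord_def K_def by blast
  have vK: "verts K = verts G \<inter> (C \<union> {u, v}) \<union> {w}" unfolding K_def by simp
  have eK: "edges K = ({e \<in> edges G. e \<subseteq> C \<union> {u, v}} - {{u, v}}) \<union> {{u, w}, {w, v}}" unfolding K_def by simp
  have Csub: "C \<subseteq> verts G - {u, v}" using comp_sub[OF C] by simp
  have C'sub: "C' \<subseteq> verts G - {u, v}" using comp_sub[OF C'(1)] by simp
  have disj: "C \<inter> C' = {}" using comp_same[OF C C'(1)] C'(2) by blast
  have noCC': "{x, y} \<notin> edges G" if "x \<in> C'" "y \<in> C" for x y
  proof
    assume e: "{x, y} \<in> edges G"
    have "x \<noteq> y" using disj that by blast
    have "{x, y} \<in> edges D" using e that Csub C'sub D_def by auto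
    then have "adj D y x" using \<open>x \<noteq> y\<close> unfolding adj_def by (auto simp: insert_commute)
    moreover have "x \<in> verts D" using that C'sub D_def by auto
    ultimately have "x \<in> C" using comp_closed[of C D y x] C D_def that by blast
    then show False using disj that by blast
  qed
  have wE: "w \<notin> e" if "e \<in> edges G" for e using graph_edge_sub[OF g that] w by blast
  show False
  proof (cases "w \<in> set cs")
    case False
    have csK: "3 \<le> length cs" "distinct cs" "set cs \<subseteq> verts K" "cycle_edges cs \<subseteq> edges K"
      using cs(1) unfolding is_cycle_iff by auto
    have setcs: "set cs \<subseteq> verts G \<inter> (C \<union> {u, v})" using csK(3) False vK by auto
    have "cycle_edges cs \<subseteq> edges G"
    proof
      fix e assume e: "e \<in> cycle_edges cs"
      then have "e \<subseteq> set cs" by (rule cycle_edges_sub)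
      then have "w \<notin> e" using False by auto
      then show "e \<in> edges G" using e csK(4) eK by auto
    qed
    then have "is_cycle G cs" using csK setcs unfolding is_cycle_iff by auto
    moreover have "chords G cs = chords K cs"
    proof -
      have "{e \<in> edges G. e \<subseteq> set cs} = {e \<in> edges K. e \<subseteq> set cs}"
      proof (rule set_eqI, rule iffI)
        fix e assume "e \<in> {e \<in> edges G. e \<subseteq> set cs}"
        then show "e \<in> {e \<in> edges K. e \<subseteq> set cs}" using setcs nuv eK by auto
      next
        fix e assume e: "e \<in> {e \<in> edges K. e \<subseteq> set cs}"
        then have "w \<notin> e" using False by auto
        then show "e \<in> {e \<in> edges G. e \<subseteq> set cs}" using e eK by auto
      qed
      then show ?thesis unfolding chords_def by simp
    qed
    ultimately show False using cs(2) nouc unfolding has_cycle_unique_chord_def by metis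
  next
    case True
    then obtain xs ys where csxy: "cs = xs @ w # ys" by (meson split_list)
    define R where "R = ys @ xs"
    have rot: "rotate (length (xs @ [w])) cs = R @ [w]"
      unfolding csxy R_def using rotate_append[of "xs @ [w]" ys] by simp
    have csK: "3 \<le> length cs" "distinct cs" "set cs \<subseteq> verts K" "cycle_edges cs \<subseteq> edges K"
      using cs(1) unfolding is_cycle_iff by auto
    have ceR: "cycle_edges (R @ [w]) = cycle_edges cs" using rot cycle_edges_rotate by metis
    have setR: "set (R @ [w]) = set cs" "distinct (R @ [w]) = distinct cs" "length (R @ [w]) = length cs"
      using rot by (metis set_rotate distinct_rotate length_rotate)+
    have chK: "chords K (R @ [w]) = chords K cs" unfolding chords_def using ceR setR by simp
    have Rne: "R \<noteq> []" and lenR: "2 \<le> length R" using setR(3) csK(1) by auto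
    have dR: "distinct R" "w \<notin> set R" using setR(2) csK(2) by auto
    have setR2: "set R \<subseteq> verts G \<inter> (C \<union> {u, v})" using setR(1) csK(3) vK dR(2) by auto
    define a where "a = hd R"
    define b where "b = last R"
    have ce1: "cycle_edges (R @ [w]) = pe R \<union> {{b, w}, {w, a}}"
      using cycle_edges_pe[of "R @ [w]"] pe_append[of R "[w]"] Rne unfolding a_def b_def by auto
    have bw: "{b, w} \<in> edges K" and wa: "{w, a} \<in> edges K" using ce1 ceR csK(4) by auto
    have "b \<noteq> w" "a \<noteq> w" using dR Rne a_def b_def by auto
    have bin: "b \<in> {u, v}"
    proof -
      have "{b, w} \<notin> edges G" using wE by blast
      then have "{b, w} = {u, w} \<or> {b, w} = {w, v}" using bw eK by auto
      then show ?thesis using \<open>b \<noteq> w\<close> by (auto simp: doubleton_eq_iff)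
    qed
    have ain: "a \<in> {u, v}"
    proof -
      have "{w, a} \<notin> edges G" using wE by blast
      then have "{w, a} = {u, w} \<or> {w, a} = {w, v}" using wa eK by auto
      then show ?thesis using \<open>a \<noteq> w\<close> by (auto simp: doubleton_eq_iff)
    qed
    have "a \<noteq> b" using hd_neq_last[OF dR(1) lenR] a_def b_def by simp
    then have abc: "(a = u \<and> b = v) \<or> (a = v \<and> b = u)" using ain bin by auto
    have nab: "{a, b} \<notin> edges G" using abc nuv by (auto simp: insert_commute)
    obtain Q where Q: "Q \<noteq> []" "set Q \<subseteq> C'" "distinct Q" "a \<notin> set Q" "b \<notin> set Q"
      "pe (b # Q @ [a]) \<subseteq> edges G"
      "\<forall>e\<in>edges G. e \<subseteq> insert a (insert b (set Q)) \<longrightarrow> e \<in> pe (b # Q @ [a])"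
      using path_exists[OF g C'(1) ain bin \<open>a \<noteq> b\<close> nab nb] by blast
    define PQ where "PQ = pe (b # Q @ [a])"
    have PQ_eq: "PQ = insert {b, hd Q} (pe Q \<union> {{last Q, a}})"
      unfolding PQ_def using pe_Cons[of "Q @ [a]" b] pe_append[of Q "[a]"] Q(1) by simp
    have PQ_meet: "e \<inter> set Q \<noteq> {}" if "e \<in> PQ" for e
    proof -
      from that PQ_eq consider "e = {b, hd Q}" | "e \<in> pe Q" | "e = {last Q, a}" by auto
      then show ?thesis
      proof cases
        case 1 then show ?thesis using Q(1) by auto
      next
        case 2 then show ?thesis using pe_form by fastforce
      next
        case 3 then show ?thesis using Q(1) by auto
      qed
    qed
    have RQdisj: "set R \<inter> set Q = {}" using setR2 Q(2) C'sub disj by blast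
    have ce2: "cycle_edges (R @ Q) = pe R \<union> PQ"
    proof -
      have "cycle_edges (R @ Q) = pe (R @ Q) \<union> {{last Q, a}}"
        using cycle_edges_pe[of "R @ Q"] Rne Q(1) unfolding a_def by simp
      also have "\<dots> = pe R \<union> pe Q \<union> {{b, hd Q}} \<union> {{last Q, a}}"
        using pe_append[OF Rne Q(1)] unfolding b_def by simp
      finally show ?thesis using PQ_eq by auto
    qed
    have peRE: "pe R \<subseteq> edges G"
    proof
      fix e assume e: "e \<in> pe R"
      then have "e \<in> edges K" using ce1 ceR csK(4) by auto
      moreover have "w \<notin> e" using pe_sub[OF e] dR(2) by auto
      ultimately show "e \<in> edges G" using eK by auto
    qed
    have cycG: "is_cycle G (R @ Q)"
      unfolding is_cycle_iff
    proof (intro conjI)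
      show "3 \<le> length (R @ Q)" using lenR Q(1) by (cases Q) auto
      show "distinct (R @ Q)" using dR(1) Q(3) RQdisj by simp
      show "set (R @ Q) \<subseteq> verts G" using setR2 Q(2) C'sub by auto
      show "cycle_edges (R @ Q) \<subseteq> edges G" using ce2 peRE Q(6) PQ_def by auto
    qed
    define X where "X = {e \<in> edges G. e \<subseteq> set R} - pe R"
    have chK2: "chords K (R @ [w]) = X"
    proof (rule set_eqI, rule iffI)
      fix e assume "e \<in> chords K (R @ [w])"
      then have e: "e \<in> edges K" "e \<subseteq> set R \<union> {w}" "e \<notin> pe R \<union> {{b, w}, {w, a}}"
        unfolding chords_def ce1 by auto
      have "e \<noteq> {u, w}" "e \<noteq> {w, v}" using e(3) abc by (auto simp: insert_commute)
      then have eG: "e \<in> edges G" using e(1) eK by auto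
      then have "w \<notin> e" using wE by blast
      then show "e \<in> X" using e eG unfolding X_def by auto
    next
      fix e assume "e \<in> X"
      then have e: "e \<in> edges G" "e \<subseteq> set R" "e \<notin> pe R" unfolding X_def by auto
      have "e \<subseteq> C \<union> {u, v}" using e(2) setR2 by auto
      moreover have "e \<noteq> {u, v}" using e(1) nuv by auto
      ultimately have "e \<in> edges K" using e(1) eK by auto
      moreover have "w \<notin> e" using wE e(1) by blast
      ultimately show "e \<in> chords K (R @ [w])" using e unfolding chords_def ce1 by auto
    qed
    have chG: "chords G (R @ Q) = X"
    proof (rule set_eqI, rule iffI)
      fix e assume "e \<in> chords G (R @ Q)"
      then have e: "e \<in> edges G" "e \<subseteq> set R \<union> set Q" "e \<notin> pe R \<union> PQ"
        unfolding chords_def ce2 by auto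
      have "e \<subseteq> set R"
      proof (rule ccontr)
        assume "\<not> e \<subseteq> set R"
        then obtain q where q: "q \<in> e" "q \<in> set Q" using e(2) by auto
        obtain x y where xy: "e = {x, y}" "x \<noteq> y" using graph_edge[OF g e(1)] by blast
        obtain z where z: "e = {q, z}" using xy q(1) by auto
        have zin: "z \<in> set R \<union> set Q" using z e(2) by auto
        show False
        proof (cases "z \<in> insert a (insert b (set Q))")
          case True
          then have "e \<in> PQ" using Q(7) e(1) z q(2) PQ_def by auto
          then show False using e(3) by auto
        next
          case False
          then have "z \<in> set R" "z \<notin> {u, v}" using zin abc by auto
          then have "z \<in> C" using setR2 by auto
          moreover have "q \<in> C'" using q Q(2) by auto
          ultimately show False using noCC' e(1) z by blast
        qed
      qed
      then show "e \<in> X" using e unfolding X_def by auto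
    next
      fix e assume "e \<in> X"
      then have e: "e \<in> edges G" "e \<subseteq> set R" "e \<notin> pe R" unfolding X_def by auto
      have "e \<notin> PQ" using PQ_meet e(2) RQdisj by blast
      then show "e \<in> chords G (R @ Q)" using e unfolding chords_def ce2 by auto
    qed
    have "card (chords G (R @ Q)) = 1" using chG chK2 chK cs(2) by simp
    then show False using cycG nouc unfolding has_cycle_unique_chord_def by blast
  qed
qed

theorem mainTheorem10:
  shows "two_cutset_safe no_unique_chord_class"
  unfolding two_cutset_safe_def
proof (intro conjI allI impI)
  show "hereditary no_unique_chord_class" unfolding hereditary_def using hered by blast
next
  fix G u v C
  assume A: "no_unique_chord_class G \<and> connected_graph G \<and> \<not> has_1cutset G \<and> is_2cutset G u v \<and>
    C \<in> components (delete G {u, v})"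
  then have g: "is_graph G" and nouc: "\<not> has_cycle_unique_chord G" and conn: "connected_graph G"
    and no1: "\<not> has_1cutset G" and c2: "is_2cutset G u v" and C: "C \<in> components (delete G {u, v})"
    unfolding no_unique_chord_class_def by auto
  have uv: "u \<in> verts G" "v \<in> verts G" "u \<noteq> v" using c2 unfolding is_2cutset_def by auto
  show "no_unique_chord_class (cl G u v C) \<or> (\<exists>w. w \<notin> verts G \<and> no_unique_chord_class (cl_star G u v C w))"
  proof (cases "{u, v} \<in> edges G")
    case True
    have e: "{u, v} \<in> edges (induced G (C \<union> {u, v}))" using True by simp
    have "cl G u v C = induced G (C \<union> {u, v})"
      unfolding cl_def Let_def using e by (simp add: prod_eq_iff verts_def edges_def insert_absorb)
    then show ?thesis using hered A by auto
  next
    case False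
    have fin: "finite (verts G)" using g unfolding is_graph_def by simp
    obtain w where w: "w \<notin> verts G" using ex_new_if_finite[OF infinite_UNIV_nat fin] by blast
    have "card (components (delete G {u, v})) \<noteq> 1" using c2 unfolding is_2cutset_def connected_graph_def by simp
    moreover have "components (delete G {u, v}) = {C}" if "\<forall>C'\<in>components (delete G {u, v}). C' = C"
      using that C by blast
    ultimately obtain C' where C': "C' \<in> components (delete G {u, v})" "C' \<noteq> C"
      by force
    have nbu: "\<exists>c\<in>C'. {u, c} \<in> edges G" using nbr[OF g conn no1 uv C'(1)] .
    have "delete G {v, u} = delete G {u, v}" by (simp add: insert_commute)
    then have nbv: "\<exists>c\<in>C'. {v, c} \<in> edges G" using nbr[OF g conn no1 uv(2) uv(1) uv(3)[symmetric]] C'(1) by simp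
    have nb: "\<forall>z\<in>{u, v}. \<exists>c\<in>C'. {z, c} \<in> edges G" using nbu nbv by blast
    have gK: "is_graph (cl_star G u v C w)"
    proof -
      have "finite (verts (cl_star G u v C w))" using fin by simp
      moreover have "\<exists>x y. e = {x, y} \<and> x \<noteq> y \<and> x \<in> verts (cl_star G u v C w) \<and> y \<in> verts (cl_star G u v C w)"
        if "e \<in> edges (cl_star G u v C w)" for e
      proof -
        from that consider "e \<in> edges G" "e \<subseteq> C \<union> {u, v}" | "e = {u, w}" | "e = {w, v}" by auto
        then show ?thesis
        proof cases
          case 1
          then obtain x y where "e = {x, y}" "x \<noteq> y" "x \<in> verts G" "y \<in> verts G" using graph_edge[OF g] by blast
          then show ?thesis using 1 by auto
        next
          case 2 then show ?thesis using uv w by (intro exI[of _ u] exI[of _ w]) auto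
        next
          case 3 then show ?thesis using uv w by (intro exI[of _ w] exI[of _ v]) auto
        qed
      qed
      ultimately show ?thesis unfolding is_graph_def by blast
    qed
    have "\<not> has_cycle_unique_chord (cl_star G u v C w)"
      using main_lemma[OF g nouc False uv w C C' nb] .
    then show ?thesis using gK w unfolding no_unique_chord_class_def by blast
  qed
qed

end
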